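(* For all $\varepsilon,\delta>0$ and all $k\in\mathbb N$ there exists $N=N(\delta,\varepsilon,k)$ such that: if $r>N$ and $A\subseteq\Lambda_k^r$ has $|A|\ge\delta|\Lambda_k^r|$, then for every $x\in\Lambda_k^r$ there are $a_1,a_2\in A$ with $a_1^{-1}a_2\in U_{r\varepsilon}(x)$.
   Context: $\Lambda_k=\{\lambda\in\mathbb C:\lambda^k=1\}$ is the multiplicative group of $k$-th roots of unity, and $\Lambda_k^r$ is its $r$-th Cartesian power with coordinatewise multiplication. Let $d_0$ be one half of Euclidean distance on $\Lambda_k$, and for $x,y\in\Lambda_k^r$ let $d(x,y)=\sum_{j=1}^r d_0(x_j,y_j)$. For $t\ge0$, $U_t(x)=\{y\in\Lambda_k^r:d(x,y)\le t\}$. *)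

theory Defs
  imports Complex_Main "HOL-Library.FuncSet"
begin

definition unit_roots :: "nat \<Rightarrow> complex set" where
  "unit_roots k = {z. z ^ k = 1}"

definition root_cube :: "nat \<Rightarrow> nat \<Rightarrow> (nat \<Rightarrow> complex) set" where
  "root_cube k r = PiE {..<r} (\<lambda>_. unit_roots k)"

definition d0 :: "complex \<Rightarrow> complex \<Rightarrow> real" where
  "d0 z w = cmod (z - w) / 2"

definition cube_dist :: "nat \<Rightarrow> (nat \<Rightarrow> complex) \<Rightarrow> (nat \<Rightarrow> complex) \<Rightarrow> real" where
  "cube_dist r x y = (\<Sum>j<r. d0 (x j) (y j))"

definition U_ball :: "nat \<Rightarrow> nat \<Rightarrow> real \<Rightarrow> (nat \<Rightarrow> complex) \<Rightarrow> (nat \<Rightarrow> complex) set" where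
  "U_ball k r t x = {y \<in> root_cube k r. cube_dist r x y \<le> t}"

definition cube_divl :: "nat \<Rightarrow> (nat \<Rightarrow> complex) \<Rightarrow> (nat \<Rightarrow> complex) \<Rightarrow> (nat \<Rightarrow> complex)" where
  "cube_divl r a b = restrict (\<lambda>j. inverse (a j) * b j) {..<r}"

end

theory Submission
  imports Defs
begin


definition Lip1 :: "'a set \<Rightarrow> 'b set \<Rightarrow> (('b \<Rightarrow> 'a) \<Rightarrow> real) \<Rightarrow> bool" where
  "Lip1 S I f \<longleftrightarrow> (\<forall>x\<in>PiE I (\<lambda>_. S). \<forall>i\<in>I. \<forall>s\<in>S. \<bar>f x - f (x(i:=s))\<bar> \<le> 1)"

lemma fiber_bound:
  fixes u :: "'a \<Rightarrow> real"
  assumes "finite S" "S \<noteq> {}" "\<And>s t. s \<in> S \<Longrightarrow> t \<in> S \<Longrightarrow> \<bar>u s - u t\<bar> \<le> 1"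
  shows "(\<Sum>s\<in>S. (u s)\<^sup>2) - real (card S) * ((\<Sum>s\<in>S. u s) / real (card S))\<^sup>2 \<le> real (card S)"
proof -
  define q where "q = real (card S)"
  have q: "q > 0" using assms by (simp add: q_def card_gt_0_iff)
  define h where "h = (\<Sum>s\<in>S. u s) / q"
  have hs: "(\<Sum>s\<in>S. u s) = q * h" using q by (simp add: h_def)
  have id: "(\<Sum>s\<in>S. (u s - h)\<^sup>2) = (\<Sum>s\<in>S. (u s)\<^sup>2) - q * h\<^sup>2"
  proof -
    have "(\<Sum>s\<in>S. (u s - h)\<^sup>2) = (\<Sum>s\<in>S. (u s)\<^sup>2 - 2 * h * u s + h\<^sup>2)"
      by (intro sum.cong) (auto simp: power2_eq_square algebra_simps)
    also have "\<dots> = (\<Sum>s\<in>S. (u s)\<^sup>2) - 2 * h * (\<Sum>s\<in>S. u s) + q * h\<^sup>2"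
      by (simp add: sum.distrib sum_subtractf sum_distrib_left q_def)
    finally show ?thesis using hs by (simp add: power2_eq_square algebra_simps)
  qed
  have each: "(u s - h)\<^sup>2 \<le> 1" if "s \<in> S" for s
  proof -
    have "u s - h = (\<Sum>t\<in>S. u s - u t) / q"
      using q hs by (simp add: sum_subtractf q_def field_simps)
    hence "\<bar>u s - h\<bar> \<le> (\<Sum>t\<in>S. \<bar>u s - u t\<bar>) / q"
      using q by (simp add: divide_right_mono sum_abs abs_divide)
    also have "\<dots> \<le> (\<Sum>t\<in>S. 1) / q"
      using q assms(3)[OF that] by (intro divide_right_mono sum_mono) auto
    also have "\<dots> = 1" using q by (simp add: q_def)
    finally have "\<bar>u s - h\<bar> \<le> 1" .
    thus ?thesis by (metis abs_ge_zero power2_abs power_le_one)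
  qed
  have "(\<Sum>s\<in>S. (u s - h)\<^sup>2) \<le> (\<Sum>s\<in>S. 1)" by (intro sum_mono each)
  thus ?thesis using id by (simp add: q_def h_def)
qed

lemma sum_PiE_insert:
  fixes F :: "('b \<Rightarrow> 'a) \<Rightarrow> real"
  assumes "i \<notin> I"
  shows "(\<Sum>x\<in>PiE (insert i I) (\<lambda>_. S). F x) = (\<Sum>g\<in>PiE I (\<lambda>_. S). \<Sum>s\<in>S. F (g(i:=s)))"
proof -
  have "(\<Sum>x\<in>PiE (insert i I) (\<lambda>_. S). F x) = (\<Sum>p\<in>S \<times> PiE I (\<lambda>_. S). F ((\<lambda>(y, g). g(i := y)) p))"
    unfolding PiE_insert_eq using inj_combinator[OF assms, of "\<lambda>_. S"]
    by (subst sum.reindex) auto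
  also have "\<dots> = (\<Sum>s\<in>S. \<Sum>g\<in>PiE I (\<lambda>_. S). F (g(i:=s)))"
    by (simp add: sum.cartesian_product split_def)
  also have "\<dots> = (\<Sum>g\<in>PiE I (\<lambda>_. S). \<Sum>s\<in>S. F (g(i:=s)))"
    by (rule sum.swap)
  finally show ?thesis .
qed

lemma efron_stein:
  assumes "finite I" "finite S" "S \<noteq> {}" "Lip1 S I f"
  shows "real (card (PiE I (\<lambda>_. S))) * (\<Sum>x\<in>PiE I (\<lambda>_. S). (f x)\<^sup>2) - (\<Sum>x\<in>PiE I (\<lambda>_. S). f x)\<^sup>2
         \<le> real (card I) * (real (card (PiE I (\<lambda>_. S))))\<^sup>2"
  using assms(1,4)
proof (induction I arbitrary: f rule: finite_induct)
  case empty
  show ?case by (simp add: PiE_empty_domain)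
next
  case (insert i I)
  define C where "C = PiE I (\<lambda>_. S)"
  define q where "q = real (card S)"
  define M where "M = real (card C)"
  have q: "q > 0" using assms by (simp add: q_def card_gt_0_iff)
  have finC: "finite C" unfolding C_def using assms(2) insert.hyps by (intro finite_PiE) auto
  have cardC': "real (card (PiE (insert i I) (\<lambda>_. S))) = q * M"
    using insert assms by (simp add: card_PiE q_def M_def C_def)
  define h where "h g = (\<Sum>s\<in>S. f (g(i:=s))) / q" for g
  have lipf: "\<bar>f x - f (x(j:=s))\<bar> \<le> 1" if "x \<in> PiE (insert i I) (\<lambda>_. S)" "j \<in> insert i I" "s \<in> S" for x j s
    using insert.prems that unfolding Lip1_def by blast
  have lip: "Lip1 S I h"
    unfolding Lip1_def
  proof (intro ballI)
    fix x j t assume x: "x \<in> PiE I (\<lambda>_. S)" and j: "j \<in> I" and t: "t \<in> S"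
    have ij: "i \<noteq> j" using insert j by auto
    have "h x - h (x(j:=t)) = (\<Sum>s\<in>S. f (x(i:=s)) - f ((x(i:=s))(j:=t))) / q"
      unfolding h_def using ij by (simp add: sum_subtractf diff_divide_distrib fun_upd_twist)
    hence "\<bar>h x - h (x(j:=t))\<bar> \<le> (\<Sum>s\<in>S. \<bar>f (x(i:=s)) - f ((x(i:=s))(j:=t))\<bar>) / q"
      using q by (simp add: divide_right_mono sum_abs abs_divide)
    also have "\<dots> \<le> (\<Sum>s\<in>S. 1) / q"
    proof (intro divide_right_mono sum_mono)
      fix s assume s: "s \<in> S"
      have "x(i:=s) \<in> PiE (insert i I) (\<lambda>_. S)" using x s by (auto simp: PiE_def extensional_def Pi_def)
      thus "\<bar>f (x(i:=s)) - f ((x(i:=s))(j:=t))\<bar> \<le> 1" using lipf j t by auto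
    qed (use q in auto)
    also have "\<dots> = 1" using q by (simp add: q_def)
    finally show "\<bar>h x - h (x(j:=t))\<bar> \<le> 1" .
  qed
  have IH: "M * (\<Sum>g\<in>C. (h g)\<^sup>2) - (\<Sum>g\<in>C. h g)\<^sup>2 \<le> real (card I) * M\<^sup>2"
    using insert.IH[OF lip] by (simp add: C_def M_def)
  define P where "P = (\<Sum>g\<in>C. \<Sum>s\<in>S. f (g(i:=s)))"
  define Q where "Q = (\<Sum>g\<in>C. \<Sum>s\<in>S. (f (g(i:=s)))\<^sup>2)"
  have sumh: "(\<Sum>g\<in>C. h g) = P / q" unfolding h_def P_def by (simp add: sum_divide_distrib)
  have fib: "(\<Sum>s\<in>S. (f (g(i:=s)))\<^sup>2) - q * (h g)\<^sup>2 \<le> q" if g: "g \<in> C" for g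
    unfolding h_def q_def
  proof (rule fiber_bound[OF assms(2,3)])
    fix s t assume s: "s \<in> S" and t: "t \<in> S"
    have "g(i:=s) \<in> PiE (insert i I) (\<lambda>_. S)" using g s by (auto simp: C_def PiE_def extensional_def Pi_def)
    from lipf[OF this, of i t] t show "\<bar>f (g(i:=s)) - f (g(i:=t))\<bar> \<le> 1" by simp
  qed
  have "(\<Sum>g\<in>C. (\<Sum>s\<in>S. (f (g(i:=s)))\<^sup>2) - q * (h g)\<^sup>2) \<le> (\<Sum>g\<in>C. q)"
    by (intro sum_mono fib)
  hence fib2: "Q - q * (\<Sum>g\<in>C. (h g)\<^sup>2) \<le> q * M"
    by (simp add: Q_def sum_subtractf sum_distrib_left M_def mult.commute)
  have M0: "M \<ge> 0" by (simp add: M_def)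
  have A: "q * M * (Q - q * (\<Sum>g\<in>C. (h g)\<^sup>2)) \<le> q * M * (q * M)"
    using fib2 q M0 by (intro mult_left_mono) auto
  have B: "q\<^sup>2 * (M * (\<Sum>g\<in>C. (h g)\<^sup>2) - (P/q)\<^sup>2) \<le> q\<^sup>2 * (real (card I) * M\<^sup>2)"
    using IH sumh by (intro mult_left_mono) auto
  have "q * M * Q - P\<^sup>2 = q * M * (Q - q * (\<Sum>g\<in>C. (h g)\<^sup>2)) + q\<^sup>2 * (M * (\<Sum>g\<in>C. (h g)\<^sup>2) - (P/q)\<^sup>2)"
    using q by (simp add: power2_eq_square field_simps)
  also have "\<dots> \<le> q * M * (q * M) + q\<^sup>2 * (real (card I) * M\<^sup>2)" using A B by linarith
  also have "\<dots> = real (card (insert i I)) * (q * M)\<^sup>2"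
    using insert by (simp add: power2_eq_square algebra_simps)
  finally show ?case
    unfolding cardC' using insert.hyps
    by (simp add: sum_PiE_insert P_def Q_def C_def)
qed


definition ham :: "'b set \<Rightarrow> ('b \<Rightarrow> 'a) \<Rightarrow> ('b \<Rightarrow> 'a) \<Rightarrow> nat" where
  "ham I x y = card {j\<in>I. x j \<noteq> y j}"

lemma ham_upd: assumes "finite I" "i \<in> I"
  shows "ham I x a \<le> ham I (x(i:=s)) a + 1"
proof -
  have "{j\<in>I. x j \<noteq> a j} \<subseteq> insert i {j\<in>I. (x(i:=s)) j \<noteq> a j}" by auto
  hence "ham I x a \<le> card (insert i {j\<in>I. (x(i:=s)) j \<noteq> a j})"
    unfolding ham_def using assms by (intro card_mono) auto
  also have "\<dots> \<le> ham I (x(i:=s)) a + 1"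
  proof -
    have fin: "finite {j\<in>I. (x(i:=s)) j \<noteq> a j}" using assms(1) by simp
    show ?thesis unfolding ham_def using fin by (simp add: card_insert_if)
  qed
  finally show ?thesis .
qed

lemma Min_shift:
  fixes g g' :: "'c \<Rightarrow> nat"
  assumes "finite A" "A \<noteq> {}" "\<And>a. a \<in> A \<Longrightarrow> g a \<le> g' a + 1"
  shows "Min (g ` A) \<le> Min (g' ` A) + 1"
proof -
  have "Min (g' ` A) \<in> g' ` A" using assms(1,2) by (intro Min_in) auto
  then obtain a where a: "a \<in> A" "Min (g' ` A) = g' a" by auto
  have "Min (g ` A) \<le> g a" using a assms by (intro Min_le) auto
  thus ?thesis using a assms(3)[OF a(1)] by linarith
qed

lemma pair_sum:
  fixes F :: "'c \<Rightarrow> real"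
  shows "(\<Sum>x\<in>X. \<Sum>y\<in>X. (F x - F y)\<^sup>2) = 2 * (real (card X) * (\<Sum>x\<in>X. (F x)\<^sup>2) - (\<Sum>x\<in>X. F x)\<^sup>2)"
proof -
  have "(\<Sum>x\<in>X. \<Sum>y\<in>X. (F x - F y)\<^sup>2) = (\<Sum>x\<in>X. \<Sum>y\<in>X. (F x)\<^sup>2 + (F y)\<^sup>2 - 2 * F x * F y)"
    by (intro sum.cong refl) (simp add: power2_eq_square algebra_simps)
  also have "\<dots> = (\<Sum>x\<in>X. real (card X) * (F x)\<^sup>2 + (\<Sum>y\<in>X. (F y)\<^sup>2) - 2 * F x * (\<Sum>y\<in>X. F y))"
    by (simp add: sum.distrib sum_subtractf sum_distrib_left)
  also have "\<dots> = 2 * (real (card X) * (\<Sum>x\<in>X. (F x)\<^sup>2) - (\<Sum>x\<in>X. F x)\<^sup>2)"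
    by (simp add: sum.distrib sum_subtractf sum_distrib_left sum_distrib_right power2_eq_square algebra_simps)
  finally show ?thesis .
qed

lemma separated:
  assumes "finite I" "finite S" "S \<noteq> {}" "A \<subseteq> PiE I (\<lambda>_. S)" "B \<subseteq> PiE I (\<lambda>_. S)"
    "t \<ge> 0" "\<And>a b. a \<in> A \<Longrightarrow> b \<in> B \<Longrightarrow> real (ham I b a) > t" "A \<noteq> {}"
  shows "real (card A) * real (card B) * t\<^sup>2 \<le> real (card I) * (real (card (PiE I (\<lambda>_. S))))\<^sup>2"
proof -
  define C where "C = PiE I (\<lambda>_. S)"
  have finC: "finite C" unfolding C_def using assms by (intro finite_PiE) auto
  have finA: "finite A" using finC assms(4) C_def finite_subset by blast
  have finB: "finite B" using finC assms(5) C_def finite_subset by blast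
  define f where "f x = real (Min ((\<lambda>a. ham I x a) ` A))" for x
  have lip: "Lip1 S I f" unfolding Lip1_def
  proof (intro ballI)
    fix x i s assume "x \<in> PiE I (\<lambda>_. S)" "i \<in> I" "s \<in> S"
    have 1: "Min ((\<lambda>a. ham I x a) ` A) \<le> Min ((\<lambda>a. ham I (x(i:=s)) a) ` A) + 1"
      by (intro Min_shift[OF finA assms(8)] ham_upd[OF assms(1) \<open>i\<in>I\<close>])
    have 2: "Min ((\<lambda>a. ham I (x(i:=s)) a) ` A) \<le> Min ((\<lambda>a. ham I x a) ` A) + 1"
    proof (intro Min_shift[OF finA assms(8)])
      fix a show "ham I (x(i := s)) a \<le> ham I x a + 1"
        using ham_upd[OF assms(1) \<open>i\<in>I\<close>, of "x(i:=s)" a "x i"] by simp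
    qed
    show "\<bar>f x - f (x(i := s))\<bar> \<le> 1" unfolding f_def using 1 2 by linarith
  qed
  have ES: "real (card C) * (\<Sum>x\<in>C. (f x)\<^sup>2) - (\<Sum>x\<in>C. f x)\<^sup>2 \<le> real (card I) * (real (card C))\<^sup>2"
    using efron_stein[OF assms(1,2,3) lip] by (simp add: C_def)
  have fA: "f a = 0" if "a \<in> A" for a
  proof -
    have "ham I a a = 0" by (simp add: ham_def)
    have "ham I a a \<in> (\<lambda>a'. ham I a a') ` A" using that by blast
    from Min_le[OF finite_imageI[OF finA] this] \<open>ham I a a = 0\<close>
    have "Min ((\<lambda>a'. ham I a a') ` A) \<le> 0" by simp
    thus ?thesis by (simp add: f_def)
  qed
  have fB: "f b > t" if "b \<in> B" for b
  proof -
    have "Min ((\<lambda>a. ham I b a) ` A) \<in> (\<lambda>a. ham I b a) ` A" using finA assms(8) by (intro Min_in) auto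
    then obtain a where "a \<in> A" "Min ((\<lambda>a. ham I b a) ` A) = ham I b a" by auto
    thus ?thesis using assms(7)[OF _ that] by (simp add: f_def)
  qed
  have disj: "A \<inter> B = {}"
  proof (rule ccontr)
    assume "A \<inter> B \<noteq> {}" then obtain a where "a \<in> A" "a \<in> B" by auto
    thus False using fA[of a] fB[of a] assms(6) by simp
  qed
  define G where "G x y = (f x - f y)\<^sup>2" for x y
  have G0: "G x y \<ge> 0" for x y by (simp add: G_def)
  have GAB: "G x y \<ge> t\<^sup>2" "G y x \<ge> t\<^sup>2" if "x \<in> A" "y \<in> B" for x y
  proof -
    have "f y - f x > t" using fA[OF that(1)] fB[OF that(2)] by simp
    hence "t\<^sup>2 \<le> (f y - f x)\<^sup>2" using assms(6) by (intro power_mono) auto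
    thus "G x y \<ge> t\<^sup>2" "G y x \<ge> t\<^sup>2" by (simp_all add: G_def power2_commute)
  qed
  have "real (card A) * real (card B) * t\<^sup>2 = (\<Sum>x\<in>A. \<Sum>y\<in>B. t\<^sup>2)" by simp
  also have "\<dots> \<le> (\<Sum>x\<in>A. \<Sum>y\<in>B. G x y)" using GAB by (intro sum_mono) auto
  finally have s1: "real (card A) * real (card B) * t\<^sup>2 \<le> (\<Sum>x\<in>A. \<Sum>y\<in>B. G x y)" .
  have "real (card A) * real (card B) * t\<^sup>2 = (\<Sum>x\<in>B. \<Sum>y\<in>A. t\<^sup>2)" by simp
  also have "\<dots> \<le> (\<Sum>x\<in>B. \<Sum>y\<in>A. G x y)" using GAB by (intro sum_mono) auto
  finally have s2: "real (card A) * real (card B) * t\<^sup>2 \<le> (\<Sum>x\<in>B. \<Sum>y\<in>A. G x y)" .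
  have m1: "(\<Sum>x\<in>A. \<Sum>y\<in>B. G x y) \<le> (\<Sum>x\<in>A. \<Sum>y\<in>C. G x y)"
    using assms(5) finC G0 unfolding C_def by (intro sum_mono sum_mono2) auto
  have m2: "(\<Sum>x\<in>B. \<Sum>y\<in>A. G x y) \<le> (\<Sum>x\<in>B. \<Sum>y\<in>C. G x y)"
    using assms(4) finC G0 unfolding C_def by (intro sum_mono sum_mono2) auto
  have m3: "(\<Sum>x\<in>A. \<Sum>y\<in>C. G x y) + (\<Sum>x\<in>B. \<Sum>y\<in>C. G x y) = (\<Sum>x\<in>A \<union> B. \<Sum>y\<in>C. G x y)"
    using finA finB disj by (simp add: sum.union_disjoint)
  have m4: "(\<Sum>x\<in>A \<union> B. \<Sum>y\<in>C. G x y) \<le> (\<Sum>x\<in>C. \<Sum>y\<in>C. G x y)"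
    using assms(4,5) finC G0 unfolding C_def by (intro sum_mono2) (auto intro: sum_nonneg)
  have m5: "(\<Sum>x\<in>C. \<Sum>y\<in>C. G x y) = 2 * (real (card C) * (\<Sum>x\<in>C. (f x)\<^sup>2) - (\<Sum>x\<in>C. f x)\<^sup>2)"
    unfolding G_def by (rule pair_sum)
  have "2 * (real (card A) * real (card B) * t\<^sup>2) \<le> (\<Sum>x\<in>C. \<Sum>y\<in>C. G x y)"
    using s1 s2 m1 m2 m3 m4 by linarith
  also have "\<dots> \<le> 2 * (real (card I) * (real (card C))\<^sup>2)" unfolding m5 using ES by (intro mult_left_mono) auto
  finally have "2 * (real (card A) * real (card B) * t\<^sup>2) \<le> 2 * (real (card I) * (real (card C))\<^sup>2)" .
  thus ?thesis by (simp add: C_def)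
qed


lemma unit_roots_facts:
  assumes "k \<ge> 1"
  shows "finite (unit_roots k)" "unit_roots k \<noteq> {}"
    "\<And>z. z \<in> unit_roots k \<Longrightarrow> cmod z = 1"
proof -
  show "finite (unit_roots k)" unfolding unit_roots_def using finite_roots_unity[OF assms] by simp
  have "(1::complex) \<in> unit_roots k" unfolding unit_roots_def by simp
  thus "unit_roots k \<noteq> {}" by blast
  fix z assume "z \<in> unit_roots k"
  hence "cmod z ^ k = 1" by (simp add: unit_roots_def norm_power[symmetric])
  thus "cmod z = 1" using power_eq_imp_eq_base[of "cmod z" k 1] assms by simp
qed

lemma arith_final:
  fixes \<delta> \<epsilon> M a b :: real and r :: nat
  assumes d: "\<delta> > 0" and e: "\<epsilon> > 0" and M: "M > 0" and r: "real r > 1 / (\<delta>\<^sup>2 * \<epsilon>\<^sup>2)"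
    and a: "\<delta> * M \<le> a" and key: "a * a * (real r * \<epsilon>)\<^sup>2 \<le> real r * M\<^sup>2"
  shows False
proof -
  have r0: "real r > 0" using r d e by (smt (verit) divide_pos_pos mult_pos_pos zero_less_power)
  have "(\<delta> * M)\<^sup>2 \<le> a\<^sup>2" using a d M by (intro power_mono) auto
  hence "(\<delta> * M)\<^sup>2 * (real r * \<epsilon>)\<^sup>2 \<le> a\<^sup>2 * (real r * \<epsilon>)\<^sup>2"
    by (intro mult_right_mono) auto
  also have "\<dots> \<le> real r * M\<^sup>2" using key by (simp add: power2_eq_square)
  finally have h: "(\<delta> * M)\<^sup>2 * (real r * \<epsilon>)\<^sup>2 \<le> real r * M\<^sup>2" .
  have eq: "(\<delta> * M)\<^sup>2 * (real r * \<epsilon>)\<^sup>2 = (\<delta>\<^sup>2 * \<epsilon>\<^sup>2 * real r) * (real r * M\<^sup>2)"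
    by (simp add: power_mult_distrib power2_eq_square)
  have "(\<delta>\<^sup>2 * \<epsilon>\<^sup>2 * real r) * (real r * M\<^sup>2) \<le> 1 * (real r * M\<^sup>2)" using h eq by simp
  moreover have "real r * M\<^sup>2 > 0" using r0 M by simp
  ultimately have le1: "\<delta>\<^sup>2 * \<epsilon>\<^sup>2 * real r \<le> 1" by (rule mult_right_le_imp_le)
  have pos: "\<delta>\<^sup>2 * \<epsilon>\<^sup>2 > 0" using d e by simp
  have "1 < \<delta>\<^sup>2 * \<epsilon>\<^sup>2 * real r" using r pos by (simp add: divide_less_eq mult.commute)
  thus False using le1 by simp
qed

theorem lemma6p3:
  fixes \<epsilon> \<delta> :: real and k :: nat
  assumes "\<epsilon> > 0" and "\<delta> > 0" and "k \<ge> 1"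
  shows "\<exists>N::nat. \<forall>r::nat. r > N \<longrightarrow>
           (\<forall>A. A \<subseteq> root_cube k r \<and> real (card A) \<ge> \<delta> * real (card (root_cube k r)) \<longrightarrow>
             (\<forall>x \<in> root_cube k r. \<exists>a1 \<in> A. \<exists>a2 \<in> A.
                cube_divl r a1 a2 \<in> U_ball k r (real r * \<epsilon>) x))"
proof (intro exI allI impI ballI)
  define S where "S = unit_roots k"
  have finS: "finite S" and neS: "S \<noteq> {}" and normS: "\<And>z. z \<in> S \<Longrightarrow> cmod z = 1"
    using unit_roots_facts[OF assms(3)] by (auto simp: S_def)
  have nz: "z \<noteq> 0" if "z \<in> S" for z using normS[OF that] by auto
  fix r :: nat and A x
  assume r: "r > nat \<lceil>1 / (\<delta>\<^sup>2 * \<epsilon>\<^sup>2)\<rceil>"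
  assume A: "A \<subseteq> root_cube k r \<and> real (card A) \<ge> \<delta> * real (card (root_cube k r))"
  assume x: "x \<in> root_cube k r"
  define C where "C = PiE {..<r} (\<lambda>_. S)"
  have C: "root_cube k r = C" by (simp add: C_def root_cube_def S_def)
  have finC: "finite C" unfolding C_def using finS by (intro finite_PiE) auto
  have cardC: "card C > 0" unfolding C_def using finS neS by (simp add: card_PiE card_gt_0_iff)
  define M where "M = real (card C)"
  have M: "M > 0" using cardC by (simp add: M_def)
  have AC: "A \<subseteq> C" and cardA: "real (card A) \<ge> \<delta> * M" using A C by (auto simp: M_def)
  have Ane: "A \<noteq> {}" proof
    assume "A = {}"
    moreover have "\<delta> * M > 0" using M assms(2) by simp
    ultimately show False using cardA by simp
  qed
  have xC: "x \<in> C" using x C by simp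
  show "\<exists>a1\<in>A. \<exists>a2\<in>A. cube_divl r a1 a2 \<in> U_ball k r (real r * \<epsilon>) x"
  proof (rule ccontr)
    assume no: "\<not> ?thesis"
    define mul where "mul a = restrict (\<lambda>j. x j * a j) {..<r}" for a
    define B where "B = mul ` A"
    have inS: "a j \<in> S" if "a \<in> C" "j < r" for a j using that by (auto simp: C_def)
    have mulC: "mul a \<in> C" if "a \<in> C" for a
    proof -
      have h: "x j * a j \<in> S" if "j < r" for j
        using inS[OF \<open>a \<in> C\<close> that] inS[OF xC that] by (simp add: S_def unit_roots_def power_mult_distrib)
      show ?thesis unfolding C_def mul_def using h by (simp add: restrict_PiE_iff)
    qed
    have BC: "B \<subseteq> C" using AC mulC by (auto simp: B_def)
    have inj: "inj_on mul A"
    proof (rule inj_onI)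
      fix a a' assume a: "a \<in> A" "a' \<in> A" "mul a = mul a'"
      show "a = a'"
      proof
        fix j show "a j = a' j"
        proof (cases "j < r")
          case True
          have "mul a j = mul a' j" using a(3) by simp
          hence "x j * a j = x j * a' j" using True by (simp add: mul_def)
          thus ?thesis using nz[OF inS[OF xC True]] by simp
        next
          case False
          have "a \<in> C" "a' \<in> C" using a AC by auto
          hence "a \<in> PiE {..<r} (\<lambda>_. S)" "a' \<in> PiE {..<r} (\<lambda>_. S)" by (simp_all add: C_def)
          moreover have "j \<notin> {..<r}" using False by simp
          ultimately show ?thesis by (metis PiE_arb)
        qed
      qed
    qed
    have cardB: "card B = card A" unfolding B_def using inj by (simp add: card_image)
    have sep: "real (ham {..<r} b a) > real r * \<epsilon>" if "a \<in> A" "b \<in> B" for a b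
    proof -
      from \<open>b \<in> B\<close> obtain a1 where a1: "a1 \<in> A" "b = mul a1" unfolding B_def by blast
      have a1C: "a1 \<in> C" and aC: "a \<in> C" using a1(1) that(1) AC by auto
      have h: "inverse (a1 j) * a j \<in> S" if "j < r" for j
        using inS[OF a1C that] inS[OF aC that] by (simp add: S_def unit_roots_def power_mult_distrib power_inverse)
      have divC: "cube_divl r a1 a \<in> root_cube k r"
        unfolding C C_def cube_divl_def using h by (simp add: restrict_PiE_iff)
      have "cube_dist r x (cube_divl r a1 a) > real r * \<epsilon>"
        using no a1(1) that(1) divC by (auto simp: U_ball_def not_le)
      also have "cube_dist r x (cube_divl r a1 a) \<le> (\<Sum>j<r. of_bool (b j \<noteq> a j))"
        unfolding cube_dist_def
      proof (intro sum_mono)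
        fix j assume j: "j \<in> {..<r}"
        have xs: "x j \<in> S" and a1s: "a1 j \<in> S" and as: "a j \<in> S"
          using inS j xC a1(1) that(1) AC by auto
        have bj: "b j = x j * a1 j" using j a1(2) by (simp add: mul_def)
        show "d0 (x j) (cube_divl r a1 a j) \<le> of_bool (b j \<noteq> a j)"
        proof (cases "b j = a j")
          case True
          hence "cube_divl r a1 a j = x j" using j bj nz[OF a1s] by (simp add: cube_divl_def field_simps)
          thus ?thesis using True by (simp add: d0_def)
        next
          case False
          have iS: "cmod (inverse (a1 j) * a j) = 1" using normS a1s as by (simp add: norm_mult norm_inverse)
          have "cmod (x j - inverse (a1 j) * a j) \<le> cmod (x j) + cmod (inverse (a1 j) * a j)"
            by (rule norm_triangle_ineq4)
          thus ?thesis using False j iS normS[OF xs] by (simp add: d0_def cube_divl_def)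
        qed
      qed
      also have "\<dots> = real (ham {..<r} b a)" by (simp add: ham_def Collect_conj_eq lessThan_def)
      finally show ?thesis .
    qed
    have t0: "real r * \<epsilon> \<ge> 0" using assms(1) by simp
    have key: "real (card A) * real (card B) * (real r * \<epsilon>)\<^sup>2 \<le> real (card {..<r}) * M\<^sup>2"
      using separated[OF _ finS neS _ _ t0 sep Ane] AC BC by (simp add: C_def M_def)
    have c1: "1 / (\<delta>\<^sup>2 * \<epsilon>\<^sup>2) \<le> real (nat \<lceil>1 / (\<delta>\<^sup>2 * \<epsilon>\<^sup>2)\<rceil>)"
      by (rule real_nat_ceiling_ge)
    have c2: "real (nat \<lceil>1 / (\<delta>\<^sup>2 * \<epsilon>\<^sup>2)\<rceil>) < real r" using r by (simp only: of_nat_less_iff)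
    have rr: "1 / (\<delta>\<^sup>2 * \<epsilon>\<^sup>2) < real r" using c1 c2 by (rule le_less_trans)
    have key2: "real (card A) * real (card A) * (real r * \<epsilon>)\<^sup>2 \<le> real r * M\<^sup>2"
      using key unfolding cardB card_lessThan .
    show False by (rule arith_final[OF assms(2) assms(1) M rr cardA key2])
  qed
qed

end
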